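(* If $m$ is even and $\mathcal{H}\in\operatorname{H}^m(\mathbb{C}^n)$ is generic, then $\operatorname{rank}(\mathcal{H})=\operatorname{rank}_S(\mathcal{H})=\underline{\operatorname{rank}}(\mathcal{H})=\underline{\operatorname{rank}}_S(\mathcal{H})=\operatorname{rank}_V(\mathcal{H})=1+\frac{(n-1)m}{2}.$
   Context: A tensor $\mathcal{H}\in\operatorname{T}^m(\mathbb{C}^n)$ is Hankel if there is a vector $h=(h_0,\dots,h_{(n-1)m})$ with $\mathcal{H}_{i_1\dots i_m}=h_{i_1+\cdots+i_m-m}$; $\operatorname{H}^m(\mathbb{C}^n)\cong\mathbb{C}^{(n-1)m+1}$ is the space of such tensors, and "generic" means outside a proper Zariski-closed subset. Ranks: cp rank $\operatorname{rank}(\mathcal{A})$ = least $r$ with $\mathcal{A}=\sum_{i=1}^r u_{i,1}\otimes\cdots\otimes u_{i,m}$; border rank $\underline{\operatorname{rank}}(\mathcal{A})$ = least $r$ such that $\mathcal{A}$ is a limit of such sums of $r$ terms; symmetric rank $\operatorname{rank}_S$ and symmetric border rank $\underline{\operatorname{rank}}_S$ are defined the same way with terms $u_i^{\otimes m}$; Vandermonde rank $\operatorname{rank}_V(\mathcal{H})$ = least $r$ with $\mathcal{H}=\sum_{i=1}^r(a_i^{n-1},a_i^{n-2}b_i,\dots,b_i^{n-1})^{\otimes m}$, $a_i,b_i\in\mathbb{C}$. *)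

theory Defs
  imports Complex_Main
begin

text \<open>Tensors of order m over C^n are modelled as functions on index lists;
  only the entries at valid indices (lists of length m with entries < n,
  0-based) are relevant.\<close>

type_synonym tensor = "nat list \<Rightarrow> complex"

definition tindices :: "nat \<Rightarrow> nat \<Rightarrow> nat list set" where
  "tindices n m = {idx. length idx = m \<and> (\<forall>i\<in>set idx. i < n)}"

definition hankel_tensor :: "nat \<Rightarrow> nat \<Rightarrow> (nat \<Rightarrow> complex) \<Rightarrow> tensor" where
  "hankel_tensor n m h = (\<lambda>idx. h (sum_list idx))"

definition has_cp_decomp :: "nat \<Rightarrow> nat \<Rightarrow> nat \<Rightarrow> tensor \<Rightarrow> bool" where
  "has_cp_decomp n m r A \<longleftrightarrow> (\<exists>u :: nat \<Rightarrow> nat \<Rightarrow> nat \<Rightarrow> complex.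
     \<forall>idx\<in>tindices n m. A idx = (\<Sum>i<r. \<Prod>k<m. u i k (idx ! k)))"

definition has_sym_decomp :: "nat \<Rightarrow> nat \<Rightarrow> nat \<Rightarrow> tensor \<Rightarrow> bool" where
  "has_sym_decomp n m r A \<longleftrightarrow> (\<exists>v :: nat \<Rightarrow> nat \<Rightarrow> complex.
     \<forall>idx\<in>tindices n m. A idx = (\<Sum>i<r. \<Prod>k<m. v i (idx ! k)))"

text \<open>Vandermonde vector (a^(n-1), a^(n-2) b, ..., b^(n-1)): coordinate j is a^(n-1-j) b^j.\<close>
definition has_vand_decomp :: "nat \<Rightarrow> nat \<Rightarrow> nat \<Rightarrow> tensor \<Rightarrow> bool" where
  "has_vand_decomp n m r A \<longleftrightarrow> (\<exists>a b :: nat \<Rightarrow> complex.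
     \<forall>idx\<in>tindices n m. A idx =
        (\<Sum>i<r. \<Prod>k<m. a i ^ (n - 1 - idx ! k) * b i ^ (idx ! k)))"

text \<open>Limit of a sequence of tensors (entrywise = Euclidean topology, finitely many entries).\<close>
definition is_limit_of :: "nat \<Rightarrow> nat \<Rightarrow> (nat \<Rightarrow> tensor) \<Rightarrow> tensor \<Rightarrow> bool" where
  "is_limit_of n m S A \<longleftrightarrow> (\<forall>idx\<in>tindices n m. (\<lambda>p. S p idx) \<longlonglongrightarrow> A idx)"

definition cp_rank :: "nat \<Rightarrow> nat \<Rightarrow> tensor \<Rightarrow> nat" where
  "cp_rank n m A = (LEAST r. has_cp_decomp n m r A)"

definition sym_rank :: "nat \<Rightarrow> nat \<Rightarrow> tensor \<Rightarrow> nat" where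
  "sym_rank n m A = (LEAST r. has_sym_decomp n m r A)"

definition vand_rank :: "nat \<Rightarrow> nat \<Rightarrow> tensor \<Rightarrow> nat" where
  "vand_rank n m A = (LEAST r. has_vand_decomp n m r A)"

definition border_rank :: "nat \<Rightarrow> nat \<Rightarrow> tensor \<Rightarrow> nat" where
  "border_rank n m A = (LEAST r. \<exists>S. (\<forall>p. has_cp_decomp n m r (S p)) \<and> is_limit_of n m S A)"

definition sym_border_rank :: "nat \<Rightarrow> nat \<Rightarrow> tensor \<Rightarrow> nat" where
  "sym_border_rank n m A = (LEAST r. \<exists>S. (\<forall>p. has_sym_decomp n m r (S p)) \<and> is_limit_of n m S A)"

definition poly_fun :: "nat \<Rightarrow> ((nat \<Rightarrow> complex) \<Rightarrow> complex) \<Rightarrow> bool" where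
  "poly_fun N f \<longleftrightarrow> (\<exists>(E :: (nat \<Rightarrow> nat) set) c. finite E \<and>
     (\<forall>x. f x = (\<Sum>e\<in>E. c e * (\<Prod>j<N. x j ^ e j))))"

text \<open>A property P of vectors in C^N holds generically iff it holds outside a proper
  Zariski-closed subset, i.e. outside the zero set of some nonzero polynomial.\<close>
definition generic :: "nat \<Rightarrow> ((nat \<Rightarrow> complex) \<Rightarrow> bool) \<Rightarrow> bool" where
  "generic N P \<longleftrightarrow> (\<exists>f. poly_fun N f \<and> (\<exists>x. f x \<noteq> 0) \<and> (\<forall>x. f x \<noteq> 0 \<longrightarrow> P x))"

end

theory Submission
  imports Defs "Subresultants.Subresultant_Gcd" "HOL-Computational_Algebra.Field_as_Ring"
    "HOL-Computational_Algebra.Fundamental_Theorem_Algebra"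
begin

definition mon :: "nat \<Rightarrow> (nat \<Rightarrow> nat) \<Rightarrow> (nat \<Rightarrow> complex) \<Rightarrow> complex" where
  "mon N e x = (\<Prod>j<N. x j ^ e j)"

lemma pf_mon: "poly_fun N (\<lambda>x. c * mon N e x)"
  unfolding poly_fun_def mon_def by (rule exI[of _ "{e}"], rule exI[of _ "\<lambda>_. c"], simp)

lemma pf_const: "poly_fun N (\<lambda>x. c)"
  using pf_mon[of N c "\<lambda>_. 0"] by (simp add: mon_def)

lemma pf_var: "j < N \<Longrightarrow> poly_fun N (\<lambda>x. x j)"
proof -
  assume j: "j < N"
  have "mon N (\<lambda>i. if i = j then 1 else 0) x = x j" for x
    unfolding mon_def using j
    by (subst prod.remove[of _ j]) (auto intro!: prod.neutral)
  with pf_mon[of N 1 "\<lambda>i. if i = j then 1 else 0"] show ?thesis by simp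
qed

lemma pf_expand: "poly_fun N f \<Longrightarrow> \<exists>E c. finite E \<and> (\<forall>x. f x = (\<Sum>e\<in>E. c e * mon N e x))"
  unfolding poly_fun_def mon_def by auto

lemma pf_add: assumes "poly_fun N f" "poly_fun N g" shows "poly_fun N (\<lambda>x. f x + g x)"
proof -
  obtain E c where E: "finite E" "\<And>x. f x = (\<Sum>e\<in>E. c e * mon N e x)"
    using pf_expand[OF assms(1)] by blast
  obtain F d where F: "finite F" "\<And>x. g x = (\<Sum>e\<in>F. d e * mon N e x)"
    using pf_expand[OF assms(2)] by blast
  define c' where "c' e = (if e \<in> E then c e else 0) + (if e \<in> F then d e else 0)" for e
  have "f x + g x = (\<Sum>e\<in>E \<union> F. c' e * mon N e x)" for x
  proof -
    have 1: "(\<Sum>e\<in>E \<union> F. (if e \<in> E then c e else 0) * mon N e x) = f x"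
      unfolding E(2) using E(1) F(1)
      by (intro sum.mono_neutral_cong_right) auto
    have 2: "(\<Sum>e\<in>E \<union> F. (if e \<in> F then d e else 0) * mon N e x) = g x"
      unfolding F(2) using E(1) F(1)
      by (intro sum.mono_neutral_cong_right) auto
    show ?thesis unfolding c'_def distrib_right sum.distrib 1 2 ..
  qed
  thus ?thesis unfolding poly_fun_def mon_def using E(1) F(1)
    by (intro exI[of _ "E \<union> F"] exI[of _ c']) auto
qed

lemma pf_sum: assumes "finite A" "\<And>a. a \<in> A \<Longrightarrow> poly_fun N (f a)"
  shows "poly_fun N (\<lambda>x. \<Sum>a\<in>A. f a x)"
  using assms
proof (induction A rule: finite_induct)
  case empty thus ?case by (simp add: pf_const)
next
  case (insert a A)
  have "poly_fun N (\<lambda>x. f a x + (\<Sum>a\<in>A. f a x))"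
    by (rule pf_add) (use insert in auto)
  thus ?case using insert(1,2) by simp
qed

lemma mon_mult: "mon N e x * mon N e' x = mon N (\<lambda>j. e j + e' j) x"
  unfolding mon_def by (simp add: power_add prod.distrib)

lemma pf_mult: assumes "poly_fun N f" "poly_fun N g" shows "poly_fun N (\<lambda>x. f x * g x)"
proof -
  obtain E c where E: "finite E" "\<And>x. f x = (\<Sum>e\<in>E. c e * mon N e x)"
    using pf_expand[OF assms(1)] by blast
  obtain F d where F: "finite F" "\<And>x. g x = (\<Sum>e\<in>F. d e * mon N e x)"
    using pf_expand[OF assms(2)] by blast
  have "f x * g x = (\<Sum>e\<in>E. \<Sum>e'\<in>F. (c e * d e') * mon N (\<lambda>j. e j + e' j) x)" for x
    unfolding E(2) F(2) sum_product by (intro sum.cong refl) (subst mon_mult[symmetric], simp add: algebra_simps)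
  hence eq: "(\<lambda>x. f x * g x) = (\<lambda>x. \<Sum>e\<in>E. \<Sum>e'\<in>F. (c e * d e') * mon N (\<lambda>j. e j + e' j) x)"
    by (rule ext)
  have "poly_fun N (\<lambda>x. \<Sum>e\<in>E. \<Sum>e'\<in>F. (c e * d e') * mon N (\<lambda>j. e j + e' j) x)"
    apply (rule pf_sum[OF E(1)])
    apply (rule pf_sum[OF F(1)])
    apply (rule pf_mon)
    done
  thus ?thesis unfolding eq .
qed

lemma pf_prod: assumes "finite A" "\<And>a. a \<in> A \<Longrightarrow> poly_fun N (f a)"
  shows "poly_fun N (\<lambda>x. \<Prod>a\<in>A. f a x)"
  using assms
proof (induction A rule: finite_induct)
  case empty thus ?case by (simp add: pf_const)
next
  case (insert a A)
  have "poly_fun N (\<lambda>x. f a x * (\<Prod>a\<in>A. f a x))"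
    by (rule pf_mult) (use insert in auto)
  thus ?case using insert(1,2) by simp
qed

lemma pf_det: assumes "\<And>x. M x \<in> carrier_mat d d"
  and "\<And>i j. i < d \<Longrightarrow> j < d \<Longrightarrow> poly_fun N (\<lambda>x. M x $$ (i,j))"
  shows "poly_fun N (\<lambda>x. det (M x))"
proof -
  have "det (M x) = (\<Sum> p \<in> {p. p permutes {0 ..< d}}. signof p * (\<Prod> i = 0 ..< d. M x $$ (i, p i)))" for x
    by (rule det_def'[OF assms(1)])
  moreover have "poly_fun N (\<lambda>x. \<Sum> p \<in> {p. p permutes {0 ..< d}}. signof p * (\<Prod> i = 0 ..< d. M x $$ (i, p i)))"
  proof (intro pf_sum pf_mult pf_const pf_prod)
    show "finite {p. p permutes {0..<d}}" by (simp add: finite_permutations)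
    fix p i assume "p \<in> {p. p permutes {0..<d}}" "i \<in> {0..<d}"
    thus "poly_fun N (\<lambda>x. M x $$ (i, p i))" by (intro assms(2)) (auto simp: permutes_in_image)
  qed simp
  ultimately show ?thesis by simp
qed

fun mk :: "nat \<Rightarrow> nat \<Rightarrow> nat \<Rightarrow> nat list" where
  "mk d 0 a = []"
| "mk d (Suc l) a = min a d # mk d l (a - min a d)"

lemma mk_len[simp]: "length (mk d l a) = l"
  by (induction l arbitrary: a) auto

lemma mk_le: "x \<in> set (mk d l a) \<Longrightarrow> x \<le> d"
  by (induction l arbitrary: a) auto

lemma mk_sum: "a \<le> d * l \<Longrightarrow> sum_list (mk d l a) = a"
proof (induction l arbitrary: a)
  case 0 thus ?case by simp
next
  case (Suc l)
  have "a - min a d \<le> d * l" using Suc.prems by (auto simp: min_def)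
  from Suc.IH[OF this] show ?case by simp
qed

lemma prod_lessThan_add: "(\<Prod>k<a+b. f k) = (\<Prod>k<a. f k) * (\<Prod>k<b. f (a+k))"
  for f :: "nat \<Rightarrow> 'a::comm_monoid_mult"
  by (induction b) (auto simp: lessThan_Suc ac_simps)

definition flat :: "nat \<Rightarrow> nat \<Rightarrow> nat \<Rightarrow> tensor \<Rightarrow> complex mat" where
  "flat n m K A = mat K K (\<lambda>(a,b). A (mk (n-1) (m div 2) a @ mk (n-1) (m div 2) b))"

lemma mk_idx: assumes "even m" "n \<ge> 1"
  shows "mk (n-1) (m div 2) a @ mk (n-1) (m div 2) b \<in> tindices n m"
  using assms mk_le[of _ "n-1" "m div 2"] unfolding tindices_def by fastforce

lemma sum_if_less: "r \<le> K \<Longrightarrow> (\<Sum>i = 0..<K. if i < r then X i else 0) = (\<Sum>i<r. X i)"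
  for X :: "nat \<Rightarrow> 'a::comm_monoid_add"
  by (rule sum.mono_neutral_cong_right) auto

lemma det_zero_col: assumes U: "U \<in> carrier_mat K K" and c: "c < K"
  and z: "\<And>a. a < K \<Longrightarrow> U $$ (a, c) = (0::complex)"
  shows "det U = 0"
proof -
  have "U *\<^sub>v unit_vec K c = 0\<^sub>v K"
  proof (rule eq_vecI)
    fix a assume a: "a < dim_vec (0\<^sub>v K :: complex vec)"
    hence "(U *\<^sub>v unit_vec K c) $ a = (\<Sum>j = 0..<K. U $$ (a, j) * (if j = c then 1 else 0))"
      using U unfolding mult_mat_vec_def scalar_prod_def by (auto simp: row_def unit_vec_def intro!: sum.cong)
    also have "\<dots> = U $$ (a, c)" using c by (simp add: sum.delta' if_distrib cong: if_cong)
    finally show "(U *\<^sub>v unit_vec K c) $ a = 0\<^sub>v K $ a" using z a by simp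
  qed (use U in simp)
  moreover have "unit_vec K c \<noteq> (0\<^sub>v K :: complex vec)"
    using c by (metis index_unit_vec(1) index_zero_vec(1) one_neq_zero)
  ultimately show ?thesis using det_0_iff_vec_prod_zero[OF U] unit_vec_carrier by blast
qed

lemma cp_flat_det: assumes "has_cp_decomp n m r A" "r < K" "even m" "n \<ge> 1"
  shows "det (flat n m K A) = 0"
proof -
  obtain u where u: "\<And>idx. idx \<in> tindices n m \<Longrightarrow> A idx = (\<Sum>i<r. \<Prod>k<m. u i k (idx ! k))"
    using assms(1) unfolding has_cp_decomp_def by blast
  define m2 where "m2 = m div 2"
  have m: "m = m2 + m2" using assms(3) unfolding m2_def by auto
  define \<alpha> where "\<alpha> a = mk (n-1) m2 a" for a
  define U where "U = mat K K (\<lambda>(a,i). if i < r then \<Prod>k<m2. u i k (\<alpha> a ! k) else 0)"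
  define W where "W = mat K K (\<lambda>(i,b). if i < r then \<Prod>k<m2. u i (m2+k) (\<alpha> b ! k) else 0)"
  have UK: "U \<in> carrier_mat K K" and WK: "W \<in> carrier_mat K K" unfolding U_def W_def by auto
  have "flat n m K A = U * W"
  proof (rule eq_matI)
    fix a b assume ab: "a < dim_row (U * W)" "b < dim_col (U * W)"
    hence a: "a < K" and b: "b < K" unfolding U_def W_def by auto
    have "(U * W) $$ (a,b) = (\<Sum>i = 0..<K. U $$ (a,i) * W $$ (i,b))"
      using a b UK WK by (simp add: scalar_prod_def)
    also have "\<dots> = (\<Sum>i = 0..<K. if i < r then (\<Prod>k<m2. u i k (\<alpha> a ! k)) * (\<Prod>k<m2. u i (m2+k) (\<alpha> b ! k)) else 0)"
      using a b unfolding U_def W_def by (intro sum.cong) auto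
    also have "\<dots> = (\<Sum>i<r. (\<Prod>k<m2. u i k (\<alpha> a ! k)) * (\<Prod>k<m2. u i (m2+k) (\<alpha> b ! k)))"
      using assms(2) by (intro sum_if_less) auto
    also have "\<dots> = (\<Sum>i<r. \<Prod>k<m. u i k ((\<alpha> a @ \<alpha> b) ! k))"
      unfolding m prod_lessThan_add
      by (intro sum.cong refl arg_cong2[where f="(*)"] prod.cong) (auto simp: nth_append \<alpha>_def)
    also have "\<dots> = A (\<alpha> a @ \<alpha> b)"
      using u[OF mk_idx[OF assms(3,4)]] unfolding \<alpha>_def m2_def by simp
    finally show "flat n m K A $$ (a, b) = (U * W) $$ (a, b)"
      using a b unfolding flat_def \<alpha>_def m2_def by simp
  qed (auto simp: flat_def U_def W_def)
  hence "det (flat n m K A) = det U * det W" using det_mult[OF UK WK] by simp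
  moreover have "det U = 0"
    by (rule det_zero_col[OF UK, of "K-1"]) (use assms(2) in \<open>auto simp: U_def\<close>)
  ultimately show ?thesis by simp
qed

lemma det_expand: "det (mat K K F) = (\<Sum>p\<in>{p. p permutes {0..<K}}. signof p * (\<Prod>i = 0..<K. F (i, p i)))"
  by (subst det_def'[of _ K]) (auto intro!: sum.cong prod.cong simp: permutes_in_image)

lemma det_limit: assumes "\<And>p. det (mat K K (F p)) = 0"
  and "\<And>i j. i < K \<Longrightarrow> j < K \<Longrightarrow> (\<lambda>p. F p (i,j)) \<longlonglongrightarrow> G (i,j)"
  shows "det (mat K K G) = (0::complex)"
proof -
  have "(\<lambda>p. det (mat K K (F p))) \<longlonglongrightarrow> det (mat K K G)"
    unfolding det_expand
  proof (intro tendsto_sum tendsto_mult tendsto_const tendsto_prod)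
    fix p i assume "p \<in> {p. p permutes {0..<K}}" "i \<in> {0..<K}"
    thus "(\<lambda>x. F x (i, p i)) \<longlonglongrightarrow> G (i, p i)" using assms(2) by (auto simp: permutes_in_image)
  qed
  moreover have "(\<lambda>p. det (mat K K (F p))) \<longlonglongrightarrow> 0" unfolding assms(1) by (rule tendsto_const)
  ultimately show ?thesis by (rule LIMSEQ_unique)
qed

lemma border_flat_det: assumes "\<And>p. has_cp_decomp n m r (S p)" "is_limit_of n m S A" "r < K" "even m" "n \<ge> 1"
  shows "det (flat n m K A) = 0"
  unfolding flat_def
proof (rule det_limit[where F="\<lambda>p. \<lambda>(a,b). S p (mk (n-1) (m div 2) a @ mk (n-1) (m div 2) b)"])
  fix p show "det (mat K K (\<lambda>(a,b). S p (mk (n-1) (m div 2) a @ mk (n-1) (m div 2) b))) = 0"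
    using cp_flat_det[OF assms(1) assms(3-5)] unfolding flat_def .
next
  fix i j assume "i < K" "j < K"
  thus "(\<lambda>p. case (i, j) of (a, b) \<Rightarrow> S p (mk (n - 1) (m div 2) a @ mk (n - 1) (m div 2) b)) \<longlonglongrightarrow>
         (case (i, j) of (a, b) \<Rightarrow> A (mk (n - 1) (m div 2) a @ mk (n - 1) (m div 2) b))"
    using assms(2) mk_idx[OF assms(4,5)] unfolding is_limit_of_def by simp
qed

definition Cm :: "nat \<Rightarrow> (nat \<Rightarrow> complex) \<Rightarrow> complex mat" where
  "Cm K h = mat K K (\<lambda>(a,b). h (a+b))"

lemma flat_hankel: assumes "K \<le> (n-1) * (m div 2) + 1"
  shows "flat n m K (hankel_tensor n m h) = Cm K h"
  unfolding flat_def Cm_def hankel_tensor_def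
  by (rule eq_matI) (use assms in \<open>auto simp: mk_sum\<close>)

lemma solve_lin: assumes A: "A \<in> carrier_mat n n" and d: "det A \<noteq> (0::complex)" and b: "b \<in> carrier_vec n"
  shows "\<exists>x \<in> carrier_vec n. A *\<^sub>v x = b"
proof -
  from det_non_zero_imp_unit[OF A d, unfolded Units_def, of "()"]
  obtain B where B: "B \<in> carrier_mat n n" and AB: "A * B = 1\<^sub>m n"
    by (auto simp: ring_mat_def)
  have "A *\<^sub>v (B *\<^sub>v b) = b" using assoc_mult_mat_vec[OF A B b, symmetric] AB b by simp
  thus ?thesis using B b by (intro bexI[of _ "B *\<^sub>v b"]) auto
qed

lemma vander_det: assumes inj: "inj_on t {0..<K}"
  shows "det (mat K K (\<lambda>(j,i). t i ^ j)) \<noteq> (0::complex)"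
proof
  define V where "V = mat K K (\<lambda>(j,i). t i ^ j)"
  have V: "V \<in> carrier_mat K K" unfolding V_def by simp
  assume "det (mat K K (\<lambda>(j,i). t i ^ j)) = 0"
  hence "det (transpose_mat V) = 0" using det_transpose[OF V] unfolding V_def by simp
  then obtain v where v: "v \<in> carrier_vec K" "v \<noteq> 0\<^sub>v K" "transpose_mat V *\<^sub>v v = 0\<^sub>v K"
    using det_0_iff_vec_prod_zero[of "transpose_mat V" K] V by auto
  define P where "P = (\<Sum>j<K. monom (v $ j) j)"
  have cP: "coeff P j = (if j < K then v $ j else 0)" for j
    unfolding P_def coeff_sum coeff_monom by (auto simp: sum.delta)
  have roots: "poly P (t i) = 0" if i: "i < K" for i
  proof -
    have "poly P (t i) = (\<Sum>j<K. v $ j * t i ^ j)" unfolding P_def poly_sum poly_monom ..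
    also have "\<dots> = (transpose_mat V *\<^sub>v v) $ i"
      using i v(1) V unfolding V_def
      by (auto simp: scalar_prod_def row_def atLeast0LessThan ac_simps intro!: sum.cong)
    finally show ?thesis using v(3) i by simp
  qed
  have "P \<noteq> 0"
  proof
    assume "P = 0"
    hence "v $ j = 0" if "j < K" for j using cP[of j] that by simp
    hence "v = 0\<^sub>v K" using v(1) by (intro eq_vecI) auto
    with v(2) show False by simp
  qed
  have degP: "degree P < K" if "K > 0"
  proof -
    have "degree P \<le> K - 1" by (rule degree_le) (use that in \<open>auto simp: cP\<close>)
    thus ?thesis using that by simp
  qed
  have "t ` {0..<K} \<subseteq> {x. poly P x = 0}" using roots by auto
  hence "card (t ` {0..<K}) \<le> card {x. poly P x = 0}"
    by (intro card_mono poly_roots_finite[OF \<open>P \<noteq> 0\<close>])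
  also have "\<dots> \<le> degree P" by (rule card_poly_roots_bound[OF \<open>P \<noteq> 0\<close>])
  finally have "K \<le> degree P" using card_image[OF inj] by simp
  moreover have "K > 0" using v(1,2) by (cases K) auto
  ultimately show False using degP by simp
qed

lemma res_root: assumes "(p::complex poly) \<noteq> 0"
  shows "resultant p q \<noteq> 0 \<longleftrightarrow> \<not> (\<exists>z. poly p z = 0 \<and> poly q z = 0)"
proof
  assume r: "resultant p q \<noteq> 0"
  show "\<not> (\<exists>z. poly p z = 0 \<and> poly q z = 0)"
  proof
    assume "\<exists>z. poly p z = 0 \<and> poly q z = 0"
    then obtain z where "poly p z = 0" "poly q z = 0" by blast
    hence "[:-z,1:] dvd gcd p q" by (simp add: poly_eq_0_iff_dvd)
    moreover have "gcd p q \<noteq> 0" using assms by simp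
    ultimately have "degree [:-z,1:] \<le> degree (gcd p q)" by (rule dvd_imp_degree_le)
    hence "degree (gcd p q) \<noteq> 0" by simp
    with r resultant_0_gcd show False by blast
  qed
next
  assume nr: "\<not> (\<exists>z. poly p z = 0 \<and> poly q z = 0)"
  show "resultant p q \<noteq> 0"
  proof
    assume "resultant p q = 0"
    hence "degree (gcd p q) \<noteq> 0" using resultant_0_gcd by blast
    hence "\<not> constant (poly (gcd p q))" by (simp add: constant_degree)
    then obtain z where "poly (gcd p q) z = 0" using fundamental_theorem_of_algebra by blast
    hence "[:-z,1:] dvd gcd p q" by (simp add: poly_eq_0_iff_dvd)
    hence "[:-z,1:] dvd p" "[:-z,1:] dvd q" using dvd_trans by blast+
    with nr show False by (simp add: poly_eq_0_iff_dvd)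
  qed
qed

lemma complex_root: "\<exists>l::complex. l ^ d = c" if "d > 0"
proof -
  define l where "l = rcis (root d (cmod c)) (Arg c / real d)"
  have "l ^ d = rcis (root d (cmod c) ^ d) (real d * (Arg c / real d))"
    unfolding l_def DeMoivre2 ..
  also have "\<dots> = rcis (cmod c) (Arg c)" using that by (simp add: real_root_pow_pos2)
  also have "\<dots> = c" by (rule rcis_cmod_Arg)
  finally show ?thesis by blast
qed

definition hx :: "nat \<Rightarrow> (nat \<Rightarrow> complex) \<Rightarrow> nat \<Rightarrow> complex" where
  "hx k h j = (if j \<le> 2*k then h j else 0)"
definition rhsv :: "nat \<Rightarrow> (nat \<Rightarrow> complex) \<Rightarrow> complex vec" where
  "rhsv k h = vec (Suc k) (\<lambda>j. - hx k h (j + Suc k))"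
definition pc :: "nat \<Rightarrow> (nat \<Rightarrow> complex) \<Rightarrow> nat \<Rightarrow> complex" where
  "pc k h l = (if l \<le> k then det (replace_col (Cm (Suc k) h) (rhsv k h) l)
     else if l = Suc k then det (Cm (Suc k) h) else 0)"
definition pp :: "nat \<Rightarrow> (nat \<Rightarrow> complex) \<Rightarrow> complex poly" where
  "pp k h = (\<Sum>l\<le>Suc k. monom (pc k h l) l)"
definition Sy :: "nat \<Rightarrow> (nat \<Rightarrow> complex) \<Rightarrow> complex mat" where
  "Sy k h = sylvester_mat_sub (Suc k) k (pp k h) (pderiv (pp k h))"
definition fcert :: "nat \<Rightarrow> (nat \<Rightarrow> complex) \<Rightarrow> complex" where
  "fcert k h = det (Cm (Suc k) h) * det (Sy k h)"

lemma coeff_pp: "coeff (pp k h) l = pc k h l"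
  unfolding pp_def coeff_sum coeff_monom by (cases "l \<le> Suc k") (auto simp: pc_def sum.delta)

lemma poly_pp: "poly (pp k h) z = (\<Sum>l\<le>Suc k. pc k h l * z ^ l)"
  unfolding pp_def poly_sum poly_monom ..

lemma Cm_carrier: "Cm K h \<in> carrier_mat K K" unfolding Cm_def by simp

lemma cramer_pc: assumes x: "x \<in> carrier_vec (Suc k)" and eq: "Cm (Suc k) h *\<^sub>v x = rhsv k h"
  and l: "l \<le> k"
  shows "pc k h l = x $ l * det (Cm (Suc k) h)"
  using cramer_lemma_mat[OF Cm_carrier[of "Suc k" h] x, of l] l eq unfolding pc_def by simp

lemma Cm_mult: assumes "x \<in> carrier_vec (Suc k)" "j < Suc k"
  shows "(Cm (Suc k) h *\<^sub>v x) $ j = (\<Sum>l\<le>k. h (j + l) * x $ l)"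
  using assms unfolding Cm_def
  by (auto simp: scalar_prod_def row_def atLeast0LessThan lessThan_Suc_atMost intro!: sum.cong)

lemma pp_facts: assumes d: "det (Cm (Suc k) h) \<noteq> 0"
  shows "degree (pp k h) = Suc k" "degree (pderiv (pp k h)) = k" "pp k h \<noteq> 0"
    "Sy k h = sylvester_mat (pp k h) (pderiv (pp k h))"
proof -
  have "degree (pp k h) \<le> Suc k" by (rule degree_le) (auto simp: coeff_pp pc_def)
  moreover have "Suc k \<le> degree (pp k h)" by (rule le_degree) (use d in \<open>simp add: coeff_pp pc_def\<close>)
  ultimately show dp: "degree (pp k h) = Suc k" by simp
  thus "degree (pderiv (pp k h)) = k" by (simp add: degree_pderiv)
  thus "Sy k h = sylvester_mat (pp k h) (pderiv (pp k h))"
    unfolding Sy_def sylvester_mat_def dp by simp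
  show "pp k h \<noteq> 0" using dp by auto
qed

lemma rec_h: assumes x: "x \<in> carrier_vec (Suc k)" and eq: "Cm (Suc k) h *\<^sub>v x = rhsv k h"
  and j: "j < k"
  shows "(\<Sum>l\<le>Suc k. pc k h l * h (j + l)) = 0"
proof -
  let ?d = "det (Cm (Suc k) h)"
  have "(\<Sum>l\<le>Suc k. pc k h l * h (j + l)) = (\<Sum>l\<le>k. x $ l * ?d * h (j + l)) + ?d * h (j + Suc k)"
    unfolding sum.atMost_Suc using cramer_pc[OF x eq] by (simp add: pc_def)
  also have "\<dots> = ?d * ((Cm (Suc k) h *\<^sub>v x) $ j + h (j + Suc k))"
    using Cm_mult[OF x, of j] j by (simp add: sum_distrib_left algebra_simps)
  also have "(Cm (Suc k) h *\<^sub>v x) $ j = - h (j + Suc k)"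
    unfolding eq rhsv_def hx_def using j by simp
  finally show ?thesis by simp
qed

lemma upper_decomp: assumes d: "det (Cm (Suc k) h) \<noteq> 0" and s: "det (Sy k h) \<noteq> 0"
  shows "\<exists>c t. \<forall>j \<le> 2*k. h j = (\<Sum>i<Suc k. c i * t i ^ j)"
proof -
  let ?C = "Cm (Suc k) h"
  let ?d = "det ?C"
  let ?p = "pp k h"
  obtain x where x: "x \<in> carrier_vec (Suc k)" and eq: "?C *\<^sub>v x = rhsv k h"
    using solve_lin[OF Cm_carrier d, of "rhsv k h"] by (auto simp: rhsv_def)
  note pf = pp_facts[OF d]
  have "resultant ?p (pderiv ?p) \<noteq> 0" using s pf(4) by (simp add: resultant_def)
  hence nr: "\<not> (\<exists>z. poly ?p z = 0 \<and> poly (pderiv ?p) z = 0)" using res_root[OF pf(3)] by blast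
  hence rsf: "rsquarefree ?p" by (simp add: rsquarefree_roots)
  define R where "R = {z. poly ?p z = 0}"
  have finR: "finite R" unfolding R_def by (rule poly_roots_finite[OF pf(3)])
  have "Suc k = degree (Polynomial.smult (lead_coeff ?p) (\<Prod>z\<in>R. [:- z, 1:]))"
    using complex_poly_decompose_rsquarefree[OF rsf] pf(1) unfolding R_def by simp
  also have "\<dots> = card R" using pf(3) by (simp add: degree_prod_sum_eq)
  finally have cR: "card R = Suc k" by simp
  obtain t where bt: "bij_betw t {0..<Suc k} R" using ex_bij_betw_nat_finite[OF finR] cR by metis
  have tinj: "inj_on t {0..<Suc k}" using bt by (simp add: bij_betw_def)
  have troot: "poly ?p (t i) = 0" if "i < Suc k" for i
    using bt that unfolding bij_betw_def R_def by auto
  define V where "V = mat (Suc k) (Suc k) (\<lambda>(j,i). t i ^ j)"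
  have V: "V \<in> carrier_mat (Suc k) (Suc k)" unfolding V_def by simp
  have dV: "det V \<noteq> 0" unfolding V_def by (rule vander_det[OF tinj])
  obtain c where c: "c \<in> carrier_vec (Suc k)" and ceq: "V *\<^sub>v c = vec (Suc k) h"
    using solve_lin[OF V dV, of "vec (Suc k) h"] by auto
  define s where "s j = (\<Sum>i<Suc k. c $ i * t i ^ j)" for j
  have s_low: "s j = h j" if "j \<le> k" for j
  proof -
    have "(V *\<^sub>v c) $ j = s j" using that c unfolding V_def s_def
      by (auto simp: scalar_prod_def row_def atLeast0LessThan ac_simps intro!: sum.cong)
    thus ?thesis using ceq that by simp
  qed
  have s_rec: "(\<Sum>l\<le>Suc k. pc k h l * s (j + l)) = 0" for j
  proof -
    have "(\<Sum>l\<le>Suc k. pc k h l * s (j + l)) = (\<Sum>i<Suc k. c $ i * t i ^ j * (\<Sum>l\<le>Suc k. pc k h l * t i ^ l))"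
      unfolding s_def sum_distrib_left power_add
      by (subst sum.swap) (auto intro!: sum.cong simp: ac_simps)
    also have "\<dots> = 0" using troot unfolding poly_pp by simp
    finally show ?thesis .
  qed
  have main: "s J = h J" if "J \<le> 2*k" for J
    using that
  proof (induction J rule: less_induct)
    case (less J)
    show ?case
    proof (cases "J \<le> k")
      case True thus ?thesis by (rule s_low)
    next
      case False
      define j where "j = J - Suc k"
      have J: "J = j + Suc k" and jk: "j < k" using False less.prems unfolding j_def by auto
      have IH: "s (j + l) = h (j + l)" if "l \<le> k" for l
        using less.IH[of "j + l"] that J less.prems by auto
      have e1: "?d * s J = - (\<Sum>l\<le>k. pc k h l * s (j + l))"
        using s_rec[of j] unfolding sum.atMost_Suc J by (simp add: pc_def algebra_simps eq_neg_iff_add_eq_0)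
      have e2: "?d * h J = - (\<Sum>l\<le>k. pc k h l * h (j + l))"
        using rec_h[OF x eq jk] unfolding sum.atMost_Suc J by (simp add: pc_def algebra_simps eq_neg_iff_add_eq_0)
      have "?d * s J = ?d * h J" unfolding e1 e2 using IH by simp
      thus ?thesis using d by simp
    qed
  qed
  have "\<forall>j\<le>2*k. h j = (\<Sum>i<Suc k. c $ i * t i ^ j)" using main unfolding s_def by simp
  then show ?thesis by blast
qed

lemma vand_from: assumes dec: "\<forall>j \<le> 2*k. h j = (\<Sum>i<Suc k. c i * t i ^ j)"
  and N: "2*k = (n-1)*m" and k: "k \<ge> 1"
  shows "has_vand_decomp n m (Suc k) (hankel_tensor n m h)"
proof -
  have "\<forall>i. \<exists>l::complex. l ^ (2*k) = c i" using complex_root k by auto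
  then obtain l where l: "\<And>i. l i ^ (2*k) = c i" by metis
  have key: "\<forall>idx\<in>tindices n m. hankel_tensor n m h idx = (\<Sum>i<Suc k. \<Prod>q<m. l i ^ (n - 1 - idx ! q) * (l i * t i) ^ (idx ! q))"
  proof
    fix idx assume idx: "idx \<in> tindices n m"
    hence len: "length idx = m" and lt: "\<And>q. q < m \<Longrightarrow> idx ! q < n"
      unfolding tindices_def by auto
    have S: "sum_list idx = (\<Sum>q<m. idx ! q)"
      using len by (simp add: sum_list_sum_nth atLeast0LessThan)
    have "(\<Sum>q<m. idx ! q) \<le> of_nat (card {..<m}) * (n-1)"
      by (rule sum_bounded_above) (use lt in force)
    hence Sle: "sum_list idx \<le> 2*k" using S N by (simp add: mult.commute)
    have trm: "(\<Prod>q<m. l i ^ (n - 1 - idx ! q) * (l i * t i) ^ (idx ! q)) = c i * t i ^ sum_list idx" for i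
    proof -
      have eqq: "l i ^ (n - 1 - idx ! q) * (l i * t i) ^ (idx ! q) = l i ^ (n - 1) * t i ^ (idx ! q)"
        if q: "q < m" for q
      proof -
        have "idx ! q \<le> n - 1" using lt[OF q] by simp
        hence "n - 1 = (n - 1 - idx ! q) + idx ! q" by simp
        hence "l i ^ (n - 1) = l i ^ (n - 1 - idx ! q) * l i ^ (idx ! q)"
          by (metis power_add)
        thus ?thesis by (simp add: power_mult_distrib)
      qed
      have "(\<Prod>q<m. l i ^ (n - 1 - idx ! q) * (l i * t i) ^ (idx ! q))
          = (\<Prod>q<m. l i ^ (n - 1) * t i ^ (idx ! q))"
        using eqq by (intro prod.cong) auto
      also have "\<dots> = l i ^ ((n-1) * m) * t i ^ (\<Sum>q<m. idx ! q)"
        by (simp add: prod.distrib power_sum power_mult)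
      also have "\<dots> = c i * t i ^ sum_list idx" using l[of i] N S by simp
      finally show ?thesis .
    qed
    show "hankel_tensor n m h idx = (\<Sum>i<Suc k. \<Prod>q<m. l i ^ (n - 1 - idx ! q) * (l i * t i) ^ (idx ! q))"
      unfolding trm hankel_tensor_def using dec Sle by simp
  qed
  thus ?thesis unfolding has_vand_decomp_def by (intro exI[of _ l] exI[of _ "\<lambda>i. l i * t i"]) simp
qed

lemma pf_if: "(P \<Longrightarrow> poly_fun N f) \<Longrightarrow> (\<not> P \<Longrightarrow> poly_fun N g) \<Longrightarrow> poly_fun N (\<lambda>x. if P then f x else g x)"
  by (cases P) auto

lemma pf_neg: "poly_fun N f \<Longrightarrow> poly_fun N (\<lambda>x. - f x)"
  using pf_mult[OF pf_const[of N "-1"]] by simp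

lemma pf_Cm: "i < Suc k \<Longrightarrow> j < Suc k \<Longrightarrow> poly_fun (2*k+1) (\<lambda>h. Cm (Suc k) h $$ (i,j))"
  unfolding Cm_def by (simp add: pf_var)

lemma pf_detCm: "poly_fun (2*k+1) (\<lambda>h. det (Cm (Suc k) h))"
  by (rule pf_det[OF Cm_carrier]) (rule pf_Cm)

lemma pf_pc: "poly_fun (2*k+1) (\<lambda>h. pc k h l)"
proof (cases "l \<le> k")
  case True
  have "poly_fun (2*k+1) (\<lambda>h. det (replace_col (Cm (Suc k) h) (rhsv k h) l))"
  proof (rule pf_det)
    fix h show "replace_col (Cm (Suc k) h) (rhsv k h) l \<in> carrier_mat (Suc k) (Suc k)"
      by (simp add: replace_col_def Cm_def)
  next
    fix i j assume ij: "i < Suc k" "j < Suc k"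
    have e: "replace_col (Cm (Suc k) h) (rhsv k h) l $$ (i,j) =
      (if j = l then (if i + Suc k \<le> 2*k then - h (i + Suc k) else 0) else h (i + j))" for h
      using ij by (simp add: replace_col_def Cm_def rhsv_def hx_def)
    show "poly_fun (2*k+1) (\<lambda>h. replace_col (Cm (Suc k) h) (rhsv k h) l $$ (i,j))"
      unfolding e using ij by (intro pf_if pf_neg pf_var pf_const) auto
  qed
  thus ?thesis using True unfolding pc_def by simp
next
  case False
  thus ?thesis unfolding pc_def using pf_detCm[of k] by (cases "l = Suc k") (auto simp: pf_const)
qed

lemma pf_fcert: "poly_fun (2*k+1) (fcert k)"
proof -
  have "poly_fun (2*k+1) (\<lambda>h. det (Sy k h))"
  proof (rule pf_det)
    fix h show "Sy k h \<in> carrier_mat (Suc k + k) (Suc k + k)" unfolding Sy_def by (rule sylvester_mat_sub_carrier)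
  next
    fix i j assume ij: "i < Suc k + k" "j < Suc k + k"
    show "poly_fun (2*k+1) (\<lambda>h. Sy k h $$ (i,j))"
      unfolding Sy_def sylvester_mat_sub_index[OF ij] coeff_pderiv coeff_pp
      by (intro pf_if pf_mult pf_const pf_pc)
  qed
  thus ?thesis unfolding fcert_def[abs_def] by (intro pf_mult pf_detCm)
qed

lemma wit_gen: assumes d: "det (Cm (Suc k) h) \<noteq> 0" and x: "x \<in> carrier_vec (Suc k)"
  and eq: "Cm (Suc k) h *\<^sub>v x = rhsv k h"
  and nr: "\<And>z. z^(Suc k) + (\<Sum>l\<le>k. x$l * z^l) = 0 \<Longrightarrow>
      of_nat (Suc k) * z^k + (\<Sum>l\<le>k. of_nat l * x$l * z^(l-1)) = 0 \<Longrightarrow> False"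
  shows "fcert k h \<noteq> 0"
proof -
  let ?d = "det (Cm (Suc k) h)"
  note pf = pp_facts[OF d]
  have p1: "poly (pp k h) z = ?d * (z^(Suc k) + (\<Sum>l\<le>k. x$l * z^l))" for z
    unfolding poly_pp sum.atMost_Suc using cramer_pc[OF x eq]
    by (simp add: pc_def sum_distrib_left algebra_simps)
  have eqd: "pderiv (pp k h) = (\<Sum>l\<le>Suc k. monom (of_nat l * pc k h l) (l - 1))"
    unfolding pp_def pderiv_sum pderiv_monom ..
  have p2: "poly (pderiv (pp k h)) z = ?d * (of_nat (Suc k) * z^k + (\<Sum>l\<le>k. of_nat l * x$l * z^(l-1)))" for z
    unfolding eqd poly_sum poly_monom sum.atMost_Suc using cramer_pc[OF x eq]
    by (simp add: pc_def sum_distrib_left poly_sum poly_monom algebra_simps)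
  have "\<not> (\<exists>z. poly (pp k h) z = 0 \<and> poly (pderiv (pp k h)) z = 0)"
    using nr d unfolding p1 p2 by auto
  hence "resultant (pp k h) (pderiv (pp k h)) \<noteq> 0" using res_root[OF pf(3)] by blast
  hence "det (Sy k h) \<noteq> 0" using pf(4) by (simp add: resultant_def)
  thus ?thesis using d unfolding fcert_def by simp
qed

definition w :: "nat \<Rightarrow> nat \<Rightarrow> complex" where
  "w k j = (if j = k then 1 else 0) + (if j = 2*k then 1 else 0)"

lemma Cw: assumes j: "j \<le> k" and v: "v \<in> carrier_vec (Suc k)"
  shows "(Cm (Suc k) (w k) *\<^sub>v v) $ j = v $ (k - j) + (if j = k then v $ k else 0)"
proof -
  have "(Cm (Suc k) (w k) *\<^sub>v v) $ j = (\<Sum>l\<le>k. w k (j + l) * v $ l)" using Cm_mult[OF v] j by simp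
  also have "\<dots> = (\<Sum>l\<le>k. (if l = k - j then v $ l else 0) + (if l = k \<and> j = k then v $ l else 0))"
    using j by (intro sum.cong refl) (auto simp: w_def)
  also have "\<dots> = v $ (k - j) + (if j = k then v $ k else 0)"
    unfolding sum.distrib by (cases "j = k") (simp_all add: sum.delta')
  finally show ?thesis .
qed

lemma w_det: assumes k: "k \<ge> 1" shows "det (Cm (Suc k) (w k)) \<noteq> 0"
proof
  assume "det (Cm (Suc k) (w k)) = 0"
  then obtain v where v: "v \<in> carrier_vec (Suc k)" "v \<noteq> 0\<^sub>v (Suc k)" "Cm (Suc k) (w k) *\<^sub>v v = 0\<^sub>v (Suc k)"
    using det_0_iff_vec_prod_zero[OF Cm_carrier] by blast
  have e: "v $ (k - j) + (if j = k then v $ k else 0) = 0" if "j \<le> k" for j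
    using Cw[OF that v(1)] v(3) that by simp
  have pos: "v $ l = 0" if "1 \<le> l" "l \<le> k" for l
  proof -
    have "k - l \<noteq> k" using that by simp
    thus ?thesis using e[of "k - l"] that by simp
  qed
  have "v $ 0 = 0" using e[of k] pos[of k] k by simp
  hence "v $ l = 0" if "l \<le> k" for l using pos[of l] that by (cases "l = 0") auto
  hence "v = 0\<^sub>v (Suc k)" using v(1) by (intro eq_vecI) auto
  with v(2) show False by simp
qed

lemma rhs_w: assumes "j \<le> k" "k \<ge> 1"
  shows "rhsv k (w k) $ j = (if j = k - 1 then -1 else 0)"
  using assms unfolding rhsv_def hx_def w_def by auto

lemma w_fcert: assumes k: "k \<ge> 1" shows "fcert k (w k) \<noteq> 0"
proof (cases "k = 1")
  case True
  define x :: "complex vec" where "x = vec (Suc k) (\<lambda>l. if l = 0 then 1 else -1)"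
  have x: "x \<in> carrier_vec (Suc k)" unfolding x_def by simp
  have eq: "Cm (Suc k) (w k) *\<^sub>v x = rhsv k (w k)"
  proof (rule eq_vecI)
    fix j assume "j < dim_vec (rhsv k (w k))"
    hence j: "j \<le> k" by (simp add: rhsv_def)
    show "(Cm (Suc k) (w k) *\<^sub>v x) $ j = rhsv k (w k) $ j"
      unfolding Cw[OF j x] rhs_w[OF j k] using j True by (auto simp: x_def)
  qed (simp add: rhsv_def Cm_def)
  show ?thesis
  proof (rule wit_gen[OF w_det[OF k] x eq])
    fix z :: complex
    assume a: "z^(Suc k) + (\<Sum>l\<le>k. x$l * z^l) = 0"
      and b: "of_nat (Suc k) * z^k + (\<Sum>l\<le>k. of_nat l * x$l * z^(l-1)) = 0"
    from a have a': "z^2 - z + 1 = 0" using True by (simp add: x_def power2_eq_square algebra_simps)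
    from b have "2 * z - 1 = 0" using True by (simp add: x_def)
    hence "z = 1/2" by (simp add: field_simps)
    with a' show False by (simp add: power2_eq_square)
  qed
next
  case False
  hence k2: "k \<ge> 2" using k by simp
  define x :: "complex vec" where "x = vec (Suc k) (\<lambda>l. if l = 1 then -1 else 0)"
  have x: "x \<in> carrier_vec (Suc k)" unfolding x_def by simp
  have eq: "Cm (Suc k) (w k) *\<^sub>v x = rhsv k (w k)"
  proof (rule eq_vecI)
    fix j assume "j < dim_vec (rhsv k (w k))"
    hence j: "j \<le> k" by (simp add: rhsv_def)
    show "(Cm (Suc k) (w k) *\<^sub>v x) $ j = rhsv k (w k) $ j"
      unfolding Cw[OF j x] rhs_w[OF j k] using j k2 by (auto simp: x_def)
  qed (simp add: rhsv_def Cm_def)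
  have s1: "(\<Sum>l\<le>k. x$l * z^l) = - z" for z :: complex
  proof -
    have "(\<Sum>l\<le>k. x$l * z^l) = (\<Sum>l\<le>k. if l = 1 then - z else 0)"
      by (intro sum.cong refl) (auto simp: x_def)
    also have "\<dots> = - z" using k by (simp add: sum.delta')
    finally show ?thesis .
  qed
  have s2: "(\<Sum>l\<le>k. of_nat l * x$l * z^(l-1)) = - 1" for z :: complex
  proof -
    have "(\<Sum>l\<le>k. of_nat l * x$l * z^(l-1)) = (\<Sum>l\<le>k. if l = 1 then - 1 else 0)"
      by (intro sum.cong refl) (auto simp: x_def)
    also have "\<dots> = - 1" using k by (simp add: sum.delta')
    finally show ?thesis .
  qed
  show ?thesis
  proof (rule wit_gen[OF w_det[OF k] x eq])
    fix z :: complex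
    assume a: "z^(Suc k) + (\<Sum>l\<le>k. x$l * z^l) = 0"
      and b: "of_nat (Suc k) * z^k + (\<Sum>l\<le>k. of_nat l * x$l * z^(l-1)) = 0"
    from a have a': "z * z^k = z" unfolding s1 by simp
    from b have b': "of_nat (Suc k) * z^k = 1" unfolding s2 by simp
    have "z \<noteq> 0" using b' k by (auto simp: power_0_left)
    with a' have "z^k = 1" by simp
    with b' have "of_nat (Suc k) = (1::complex)" by simp
    hence "Suc k = 1" by (metis of_nat_1 of_nat_eq_iff)
    with k show False by simp
  qed
qed

lemma vand_sym: "has_vand_decomp n m r A \<Longrightarrow> has_sym_decomp n m r A"
proof -
  assume "has_vand_decomp n m r A"
  then obtain a b where ab: "\<forall>idx\<in>tindices n m. A idx =
        (\<Sum>i<r. \<Prod>k<m. a i ^ (n - 1 - idx ! k) * b i ^ (idx ! k))"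
    unfolding has_vand_decomp_def by blast
  show ?thesis unfolding has_sym_decomp_def
    by (rule exI[of _ "\<lambda>i j. a i ^ (n - 1 - j) * b i ^ j"]) (use ab in simp)
qed

lemma sym_cp: "has_sym_decomp n m r A \<Longrightarrow> has_cp_decomp n m r A"
  unfolding has_sym_decomp_def has_cp_decomp_def
proof -
  assume "\<exists>v. \<forall>idx\<in>tindices n m. A idx = (\<Sum>i<r. \<Prod>k<m. v i (idx ! k))"
  then obtain v where v: "\<forall>idx\<in>tindices n m. A idx = (\<Sum>i<r. \<Prod>k<m. v i (idx ! k))" by blast
  show "\<exists>u. \<forall>idx\<in>tindices n m. A idx = (\<Sum>i<r. \<Prod>k<m. u i k (idx ! k))"
    by (rule exI[of _ "\<lambda>i k. v i"]) (use v in simp)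
qed

lemma limit_const: "is_limit_of n m (\<lambda>p. A) A"
  unfolding is_limit_of_def by simp

theorem corollary4p3:
  fixes n m :: nat
  assumes "even m" and "m \<ge> 2" and "n \<ge> 2"
  shows "generic ((n - 1) * m + 1) (\<lambda>h.
     let H = hankel_tensor n m h; R = 1 + (n - 1) * m div 2 in
       cp_rank n m H = R \<and> sym_rank n m H = R \<and> border_rank n m H = R \<and>
       sym_border_rank n m H = R \<and> vand_rank n m H = R)"
proof -
  define k where "k = (n - 1) * m div 2"
  have k2: "2 * k = (n - 1) * m" using assms(1) unfolding k_def by simp
  have k1: "k \<ge> 1"
  proof -
    have "(n - 1) * m \<ge> 1 * 2" using assms(2,3) by (intro mult_le_mono) auto
    thus ?thesis using k2 by simp
  qed
  have N: "(n - 1) * m + 1 = 2 * k + 1" using k2 by simp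
  have R: "1 + (n - 1) * m div 2 = Suc k" unfolding k_def by simp
  have n1: "n \<ge> 1" using assms(3) by simp
  have Kle: "Suc k \<le> (n - 1) * (m div 2) + 1"
    using assms(1) unfolding k_def by (auto elim!: evenE)
  have P: "cp_rank n m H = Suc k \<and> sym_rank n m H = Suc k \<and> border_rank n m H = Suc k \<and>
       sym_border_rank n m H = Suc k \<and> vand_rank n m H = Suc k"
    if f: "fcert k h \<noteq> 0" and H: "H = hankel_tensor n m h" for h H
  proof -
    have d: "det (Cm (Suc k) h) \<noteq> 0" and s: "det (Sy k h) \<noteq> 0" using f unfolding fcert_def by auto
    have dflat: "det (flat n m (Suc k) H) \<noteq> 0" using d flat_hankel[OF Kle] H by simp
    obtain c t where dec: "\<forall>j \<le> 2*k. h j = (\<Sum>i<Suc k. c i * t i ^ j)"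
      using upper_decomp[OF d s] by blast
    have V: "has_vand_decomp n m (Suc k) H" using vand_from[OF dec k2 k1] H by simp
    have Sd: "has_sym_decomp n m (Suc k) H" using vand_sym[OF V] .
    have Cd: "has_cp_decomp n m (Suc k) H" using sym_cp[OF Sd] .
    have lowC: "Suc k \<le> r" if "has_cp_decomp n m r H" for r
    proof (rule ccontr)
      assume "\<not> Suc k \<le> r"
      hence "r < Suc k" by simp
      from cp_flat_det[OF that this assms(1) n1] dflat show False by simp
    qed
    have lowB: "Suc k \<le> r" if "\<exists>S. (\<forall>p. has_cp_decomp n m r (S p)) \<and> is_limit_of n m S H" for r
    proof (rule ccontr)
      assume "\<not> Suc k \<le> r"
      hence r: "r < Suc k" by simp
      from that obtain S where S: "\<And>p. has_cp_decomp n m r (S p)" "is_limit_of n m S H" by blast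
      from border_flat_det[OF S r assms(1) n1] dflat show False by simp
    qed
    have "cp_rank n m H = Suc k" unfolding cp_rank_def
      by (rule Least_equality[where P="\<lambda>r. has_cp_decomp n m r H", OF Cd lowC])
    moreover have "sym_rank n m H = Suc k" unfolding sym_rank_def
      by (rule Least_equality[where P="\<lambda>r. has_sym_decomp n m r H", OF Sd]) (rule lowC[OF sym_cp])
    moreover have "vand_rank n m H = Suc k" unfolding vand_rank_def
      by (rule Least_equality[where P="\<lambda>r. has_vand_decomp n m r H", OF V]) (rule lowC[OF sym_cp[OF vand_sym]])
    moreover have "border_rank n m H = Suc k" unfolding border_rank_def
    proof (rule Least_equality)
      show "\<exists>S. (\<forall>p. has_cp_decomp n m (Suc k) (S p)) \<and> is_limit_of n m S H"
        using Cd limit_const[of n m H] by (intro exI[of _ "\<lambda>p. H"]) simp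
    qed (rule lowB)
    moreover have "sym_border_rank n m H = Suc k" unfolding sym_border_rank_def
    proof (rule Least_equality)
      show "\<exists>S. (\<forall>p. has_sym_decomp n m (Suc k) (S p)) \<and> is_limit_of n m S H"
        using Sd limit_const[of n m H] by (intro exI[of _ "\<lambda>p. H"]) simp
    next
      fix r assume "\<exists>S. (\<forall>p. has_sym_decomp n m r (S p)) \<and> is_limit_of n m S H"
      hence "\<exists>S. (\<forall>p. has_cp_decomp n m r (S p)) \<and> is_limit_of n m S H" using sym_cp by blast
      thus "Suc k \<le> r" by (rule lowB)
    qed
    ultimately show ?thesis by blast
  qed
  show ?thesis unfolding generic_def N R Let_def
    using pf_fcert[of k] w_fcert[OF k1] P by blast
qed

end
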